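(* For every integer $n\ge0$, $$\overline p(n)=(-1)^n\sum_{\substack{c\in\mathcal C_{P_4}\\ |c|=n}}(-2)^{\ell(c)},$$ where $P_4=\{m^2: m\in\mathbb N\}$ is the set of positive squares.
   Context: An overpartition of $n$ is a partition of $n$ in which the first occurrence of each distinct part may or may not be overlined; $\overline p(n)$ is the number of overpartitions of $n$ ($\overline p(0)=1$), so that $\sum_{n\ge0}\overline p(n)q^n=\prod_{j\ge1}\frac{1+q^j}{1-q^j}$. A composition is an ordered finite sequence of positive integers (including the empty one); $|c|$ is the sum and $\ell(c)$ the number of parts; $\mathcal C_T$ is the set of compositions with all parts in $T$. *)

theory Defs
  imports Main "HOL-Library.Multiset"
begin

text \<open>An overpartition of n: a partition of n (a multiset of positive parts summing to n)
  together with the set of distinct parts whose first occurrence is overlined.\<close>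
definition overpartitions :: "nat \<Rightarrow> (nat multiset \<times> nat set) set" where
  "overpartitions n = {(M, S). (\<forall>x\<in>#M. 0 < x) \<and> sum_mset M = n \<and> S \<subseteq> set_mset M}"

definition overpartition_count :: "nat \<Rightarrow> nat" where
  "overpartition_count n = card (overpartitions n)"

definition compositions_in :: "nat set \<Rightarrow> nat \<Rightarrow> nat list set" where
  "compositions_in T n = {c. (\<forall>x\<in>set c. 0 < x \<and> x \<in> T) \<and> sum_list c = n}"

definition P4 :: "nat set" where
  "P4 = {m ^ 2 | m. 1 \<le> m}"

end

theory Submission
  imports Defs "HOL-Computational_Algebra.Formal_Power_Series"
begin

unbundle fps_syntax


fun qb :: "'a::comm_ring_1 \<Rightarrow> nat \<Rightarrow> nat \<Rightarrow> 'a" where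
  "qb Q 0 k = (if k = 0 then 1 else 0)"
| "qb Q (Suc m) 0 = 1"
| "qb Q (Suc m) (Suc k) = qb Q m k + Q ^ Suc k * qb Q m (Suc k)"

fun tri :: "nat \<Rightarrow> nat" where
  "tri 0 = 0" | "tri (Suc k) = tri k + k"

lemma qb_0 [simp]: "qb Q m 0 = 1" by (cases m) auto

lemma qb_gt: "m < k \<Longrightarrow> qb Q m k = 0"
proof (induction m arbitrary: k)
  case 0 then show ?case by simp
next
  case (Suc m) then show ?case by (cases k) auto
qed

lemma qbin:
  fixes w z Q :: "'a::comm_ring_1"
  shows "(\<Prod>j<m. w + z * Q ^ j) = (\<Sum>k\<le>m. qb Q m k * Q ^ tri k * z ^ k * w ^ (m - k))"
proof (induction m arbitrary: z)
  case 0 then show ?case by simp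
next
  case (Suc m)
  define S where "S = (\<Sum>k\<le>m. qb Q m k * Q ^ (tri k + k) * z ^ k * w ^ (m - k))"
  have "(\<Prod>j<Suc m. w + z * Q ^ j) = (w + z) * (\<Prod>j<m. w + (z * Q) * Q ^ j)"
    unfolding prod.lessThan_Suc_shift by (simp add: mult_ac)
  also have "\<dots> = (w + z) * S"
    unfolding Suc.IH S_def
    by (intro arg_cong[where f="\<lambda>x. (w+z)*x"] sum.cong refl)
       (simp add: power_mult_distrib power_add mult_ac)
  also have "\<dots> = w * S + z * S" by (simp add: algebra_simps)
  finally have L: "(\<Prod>j<Suc m. w + z * Q ^ j) = w * S + z * S" .
  have zS: "z * S = (\<Sum>k\<le>m. qb Q m k * Q ^ tri (Suc k) * z ^ Suc k * w ^ (m - k))"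
    unfolding S_def sum_distrib_left by (intro sum.cong refl) (simp add: mult_ac)
  have "w * S = (\<Sum>k\<le>m. qb Q m k * Q ^ (tri k + k) * z ^ k * w ^ (Suc m - k))"
    unfolding S_def sum_distrib_left
    by (intro sum.cong refl) (simp add: mult_ac Suc_diff_le)
  also have "\<dots> = (\<Sum>k\<le>Suc m. qb Q m k * Q ^ (tri k + k) * z ^ k * w ^ (Suc m - k))"
    by (simp add: qb_gt)
  also have "\<dots> = w ^ Suc m + (\<Sum>k\<le>m. Q ^ Suc k * qb Q m (Suc k) * Q ^ tri (Suc k) * z ^ Suc k * w ^ (m - k))"
    by (subst sum.atMost_Suc_shift) (simp add: power_add mult_ac)
  finally have wS: "w * S = \<dots>" .
  have "(\<Sum>k\<le>Suc m. qb Q (Suc m) k * Q ^ tri k * z ^ k * w ^ (Suc m - k))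
     = w ^ Suc m + (\<Sum>k\<le>m. qb Q (Suc m) (Suc k) * Q ^ tri (Suc k) * z ^ Suc k * w ^ (m - k))"
    by (subst sum.atMost_Suc_shift) simp
  also have "\<dots> = w ^ Suc m + (\<Sum>k\<le>m. qb Q m k * Q ^ tri (Suc k) * z ^ Suc k * w ^ (m - k))
     + (\<Sum>k\<le>m. Q ^ Suc k * qb Q m (Suc k) * Q ^ tri (Suc k) * z ^ Suc k * w ^ (m - k))"
    by (simp add: distrib_right sum.distrib)
  finally show ?case using L zS wS by simp
qed

definition pch :: "'a::comm_ring_1 \<Rightarrow> nat \<Rightarrow> 'a" where
  "pch Q n = (\<Prod>j<n. 1 - Q ^ Suc j)"

lemma pch_Suc: "pch Q (Suc n) = pch Q n * (1 - Q ^ Suc n)"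
  by (simp add: pch_def)

lemma qb_pch: "k \<le> m \<Longrightarrow> qb Q m k * pch Q k * pch Q (m - k) = pch Q m"
proof (induction m arbitrary: k)
  case 0 then show ?case by (simp add: pch_def)
next
  case (Suc m)
  show ?case
  proof (cases k)
    case 0 then show ?thesis by (simp add: pch_def)
  next
    case (Suc j)
    with Suc.prems have jm: "j \<le> m" by simp
    have A: "qb Q m j * pch Q (Suc j) * pch Q (m - j) = pch Q m * (1 - Q ^ Suc j)"
    proof -
      have "qb Q m j * pch Q (Suc j) * pch Q (m - j) = (qb Q m j * pch Q j * pch Q (m - j)) * (1 - Q ^ Suc j)"
        by (simp only: pch_Suc mult_ac)
      then show ?thesis using Suc.IH[OF jm] by simp
    qed
    have B: "Q ^ Suc j * qb Q m (Suc j) * pch Q (Suc j) * pch Q (m - j) = pch Q m * (Q ^ Suc j - Q ^ Suc m)"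
    proof (cases "j = m")
      case True then show ?thesis by (simp add: qb_gt)
    next
      case False
      then have jm': "Suc j \<le> m" using jm by simp
      have e: "m - j = Suc (m - Suc j)" using jm' by simp
      have "Q ^ Suc j * qb Q m (Suc j) * pch Q (Suc j) * pch Q (m - j)
          = Q ^ Suc j * (qb Q m (Suc j) * pch Q (Suc j) * pch Q (m - Suc j)) * (1 - Q ^ (m - j))"
        unfolding e pch_Suc by (simp add: mult_ac)
      also have "\<dots> = pch Q m * (Q ^ Suc j - Q ^ Suc j * Q ^ (m - j))"
        using Suc.IH[OF jm'] by (simp add: algebra_simps)
      also have "Q ^ Suc j * Q ^ (m - j) = Q ^ Suc m"
      proof -
        have "Suc j + (m - j) = Suc m" using jm' by simp
        then show ?thesis by (metis power_add)
      qed
      finally show ?thesis by simp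
    qed
    have "qb Q (Suc m) k * pch Q k * pch Q (Suc m - k)
        = qb Q m j * pch Q (Suc j) * pch Q (m - j) + Q ^ Suc j * qb Q m (Suc j) * pch Q (Suc j) * pch Q (m - j)"
      using Suc by (simp only: qb.simps distrib_right diff_Suc_Suc)
    also have "\<dots> = pch Q (Suc m)" by (simp only: A B) (simp add: pch_Suc algebra_simps)
    finally show ?thesis .
  qed
qed

lemma prod_split_add: "(\<Prod>j<m+(n::nat). f j) = (\<Prod>j<m. f j) * (\<Prod>j<n. (f (m+j) :: 'a::comm_monoid_mult))"
  by (induction n) (simp_all add: mult_ac)

lemma prod_reflect: "(\<Prod>j<n. f (n - Suc j)) = (\<Prod>j<n. (f j :: 'a::comm_monoid_mult))"
proof (induction n)
  case 0 then show ?case by simp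
next
  case (Suc n)
  have "(\<Prod>j<Suc n. f (Suc n - Suc j)) = f n * (\<Prod>j<n. f (n - Suc j))"
    by (subst prod.lessThan_Suc_shift) simp
  then show ?case using Suc by (simp add: mult_ac)
qed

lemma two_tri: "2 * tri k = k * (k - 1)"
  by (induction k) (auto simp: algebra_simps)

abbreviation XX :: "rat fps" where "XX \<equiv> fps_X"

lemma dvd_coeff: "XX ^ a dvd h \<Longrightarrow> i < a \<Longrightarrow> h $ i = 0"
  by (auto simp: dvd_def fps_X_power_mult_nth)

lemma dvd_le: "a \<le> b \<Longrightarrow> XX ^ b dvd h \<Longrightarrow> XX ^ a dvd h"
  using le_imp_power_dvd dvd_trans by blast

lemma unit_cancel: "XX ^ a dvd g * f \<Longrightarrow> f $ 0 \<noteq> 0 \<Longrightarrow> XX ^ a dvd g"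
  by (simp add: dvd_mult_unit_iff)

lemma pch_nth0: "Q $ 0 = 0 \<Longrightarrow> pch (Q :: rat fps) n $ 0 = 1"
  by (induction n) (simp_all add: pch_Suc pch_def)

lemma pch_mono: "a \<le> b \<Longrightarrow> XX ^ (2*a+2) dvd pch (XX^2) b - pch (XX^2) a"
proof (induction b rule: dec_induct)
  case base then show ?case by simp
next
  case (step c)
  have h: "(XX^2)^Suc c = XX^(2*Suc c)" by (simp only: power_mult)
  have e: "pch (XX^2) (Suc c) - pch (XX^2) a = (pch (XX^2) c - pch (XX^2) a) - pch (XX^2) c * XX ^ (2 * Suc c)"
    by (simp only: pch_Suc h right_diff_distrib mult_1_right) simp
  have B: "XX ^ (2*a+2) dvd pch (XX^2) c * XX ^ (2 * Suc c)"
    using step.hyps(1) by (intro dvd_mult le_imp_power_dvd) simp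
  show ?case unfolding e by (rule dvd_diff[OF step.IH B])
qed

lemma pch_min: "XX ^ (2 * min a b + 2) dvd pch (XX^2) a - pch (XX^2) b"
proof (cases "a \<le> b")
  case True then show ?thesis using pch_mono[of a b] by (simp add: min_def dvd_diff_commute)
next
  case False then show ?thesis using pch_mono[of b a] by (simp add: min_def)
qed

lemma ring_aux: "((q::'a::comm_ring_1)*E-1)*E = q*(E*(E-p') + p'*(E-pk)) + (q*pk*p' - E)"
  by (simp add: algebra_simps)

lemma qb_E:
  assumes "k \<le> 2*n"
  shows "XX ^ (2 * min k (2*n-k) + 2) dvd qb (XX^2) (2*n) k * pch (XX^2) n - 1"
proof -
  define \<mu> where "\<mu> = min k (2*n-k)"
  define E where "E = pch (XX^2) n"
  define q where "q = qb (XX^2) (2*n) k"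
  have c: "XX ^ (2*\<mu>+2) dvd pch (XX^2) x - pch (XX^2) y" if "\<mu> \<le> x" "\<mu> \<le> y" for x y
  proof -
    have "2*\<mu>+2 \<le> 2 * min x y + 2" using that by simp
    then show ?thesis using dvd_le pch_min by blast
  qed
  have m: "\<mu> \<le> n" "\<mu> \<le> k" "\<mu> \<le> 2*n-k" "\<mu> \<le> 2*n" unfolding \<mu>_def by auto
  have eq: "q * pch (XX^2) k * pch (XX^2) (2*n-k) = pch (XX^2) (2*n)"
    unfolding q_def using qb_pch assms by blast
  have "(q * E - 1) * E = q * (E * (E - pch (XX^2) (2*n-k)) + pch (XX^2) (2*n-k) * (E - pch (XX^2) k))
          + (pch (XX^2) (2*n) - E)"
    using ring_aux[of q E "pch (XX^2) (2*n-k)" "pch (XX^2) k"] eq by simp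
  also have "XX ^ (2*\<mu>+2) dvd \<dots>"
  proof -
    have 1: "XX ^ (2*\<mu>+2) dvd E - pch (XX^2) (2*n-k)" unfolding E_def using c m by blast
    have 2: "XX ^ (2*\<mu>+2) dvd E - pch (XX^2) k" unfolding E_def using c m by blast
    have 3: "XX ^ (2*\<mu>+2) dvd pch (XX^2) (2*n) - E" unfolding E_def using c m by blast
    show ?thesis using 1 2 3 by (simp add: dvd_add dvd_mult)
  qed
  finally have "XX ^ (2*\<mu>+2) dvd (q * E - 1) * E" .
  then show ?thesis unfolding \<mu>_def q_def E_def
    by (rule unit_cancel) (simp add: pch_nth0)
qed



definition dd :: "nat \<Rightarrow> nat \<Rightarrow> nat" where "dd n k = (if k \<le> n then n - k else k - n)"

lemma exp_id:
  assumes "k \<le> 2*n" "1 \<le> n"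
  shows "k*(k-1) + (2*n-1)*(2*n-k) = (dd n k)^2 + (n*(n-1) + (2*n-1)*n)"
proof (cases "k \<le> n")
  case True
  then obtain a where a: "n = k + a" using le_Suc_ex by blast
  show ?thesis
  proof (cases k)
    case 0
    with assms a obtain b where "a = Suc b" by (cases a) auto
    then show ?thesis using 0 a by (simp add: dd_def algebra_simps power2_eq_square)
  next
    case (Suc k')
    then show ?thesis using a by (simp add: dd_def algebra_simps power2_eq_square)
  qed
next
  case False
  then obtain a where a: "k = n + a" using le_Suc_ex[of n k] by auto
  have "a \<le> n" using a assms by simp
  then obtain b where b: "n = a + b" using le_Suc_ex by blast
  from False a obtain a' where a': "a = Suc a'" by (cases a) auto
  have k: "k = Suc (Suc (2*a' + b))" and n: "n = Suc (a' + b)" using a b a' by simp_all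
  show ?thesis using False unfolding k n by (simp add: dd_def algebra_simps power2_eq_square)
qed

definition Odd :: "nat \<Rightarrow> rat fps" where "Odd n = (\<Prod>j<n. 1 - XX^(2*j+1))"

lemma prod_negpow: "(\<Prod>j<n. - (XX^(2*j))) = (-1)^n * XX^(2 * tri n)"
proof (induction n)
  case 0 then show ?case by simp
next
  case (Suc n)
  have "XX ^ (2 * tri (Suc n)) = XX^(2*tri n) * XX^(2*n)" by (simp add: power_add algebra_simps)
  then show ?case using Suc by (simp add: algebra_simps)
qed

lemma sign_dd: "(-1::rat fps)^(n+k) = (-1)^(dd n k)"
proof (cases "k \<le> n")
  case True
  then have e: "n + k = dd n k + 2*k" by (simp add: dd_def)
  have "(-1::rat fps)^(n+k) = (-1)^(dd n k) * ((-1)^2)^k" by (simp only: e power_add power_mult)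
  then show ?thesis by simp
next
  case False
  then have e: "n + k = dd n k + 2*n" by (simp add: dd_def)
  have "(-1::rat fps)^(n+k) = (-1)^(dd n k) * ((-1)^2)^n" by (simp only: e power_add power_mult)
  then show ?thesis by simp
qed

lemma G1:
  assumes n1: "1 \<le> n"
  shows "Odd n ^ 2 = (\<Sum>k\<le>2*n. (-1)^(dd n k) * qb (XX^2) (2*n) k * XX^((dd n k)^2))"
proof -
  define c where "c = n*(n-1) + (2*n-1)*n"
  define f where "f j = XX^(2*n-1) + (-1) * (XX^2)^j" for j
  have "(\<Prod>j<2*n. f j) = (\<Sum>k\<le>2*n. qb (XX^2) (2*n) k * (XX^2)^tri k * (-1)^k * (XX^(2*n-1))^(2*n-k))"
    unfolding f_def by (rule qbin)
  also have "\<dots> = (\<Sum>k\<le>2*n. XX^c * ((-1)^k * qb (XX^2) (2*n) k * XX^((dd n k)^2)))"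
  proof (intro sum.cong refl)
    fix k assume "k \<in> {..2*n}"
    then have k: "k \<le> 2*n" by simp
    have "(XX^2)^tri k * (XX^(2*n-1))^(2*n-k) = XX^(2 * tri k + (2*n-1)*(2*n-k))"
      by (simp add: power_add power_mult[symmetric] mult.commute)
    also have "2 * tri k + (2*n-1)*(2*n-k) = (dd n k)^2 + c"
      unfolding two_tri c_def using exp_id[OF k n1] .
    finally show "qb (XX^2) (2*n) k * (XX^2)^tri k * (-1)^k * (XX^(2*n-1))^(2*n-k)
        = XX^c * ((-1)^k * qb (XX^2) (2*n) k * XX^((dd n k)^2))"
      by (simp add: power_add mult_ac)
  qed
  also have "\<dots> = XX^c * (\<Sum>k\<le>2*n. (-1)^k * qb (XX^2) (2*n) k * XX^((dd n k)^2))"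
    by (simp add: sum_distrib_left)
  finally have R: "(\<Prod>j<2*n. f j) = XX^c * (\<Sum>k\<le>2*n. (-1)^k * qb (XX^2) (2*n) k * XX^((dd n k)^2))" .
  have "(\<Prod>j<2*n. f j) = (\<Prod>j<n. f j) * (\<Prod>j<n. f (n+j))"
    using prod_split_add[of f n n] by (simp add: mult_2)
  also have "(\<Prod>j<n. f (n+j)) = (\<Prod>j<n. XX^(2*n-1) * (1 - XX^(2*j+1)))"
  proof (intro prod.cong refl)
    fix j
    have e: "2*(n+j) = (2*n-1) + (2*j+1)" using n1 by simp
    have "(XX^2)^(n+j) = XX^(2*(n+j))" by (simp only: power_mult)
    also have "\<dots> = XX^(2*n-1) * XX^(2*j+1)" by (simp only: e power_add)
    finally have "(XX^2)^(n+j) = XX^(2*n-1) * XX^(2*j+1)" .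
    then show "f (n+j) = XX^(2*n-1) * (1 - XX^(2*j+1))" unfolding f_def by (simp add: algebra_simps)
  qed
  also have "\<dots> = XX^((2*n-1)*n) * Odd n"
    by (simp add: prod.distrib Odd_def power_mult)
  also have "(\<Prod>j<n. f j) = (\<Prod>j<n. - (XX^(2*j)) * (1 - XX^(2*(n - Suc j)+1)))"
  proof (intro prod.cong refl)
    fix j assume "j \<in> {..<n}"
    then have "2*n - 1 = 2*j + (2*(n - Suc j)+1)" by simp
    then have "XX^(2*n-1) = XX^(2*j) * XX^(2*(n - Suc j)+1)" by (simp add: power_add)
    then show "f j = - (XX^(2*j)) * (1 - XX^(2*(n - Suc j)+1))" unfolding f_def
      by (simp add: algebra_simps flip: power_mult)
  qed
  also have "\<dots> = (-1)^n * XX^(2 * tri n) * Odd n"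
    using prod_reflect[of "\<lambda>j. 1 - XX^(2*j+1)" n]
    by (simp only: prod.distrib prod_negpow Odd_def)
  finally have L: "(\<Prod>j<2*n. f j) = XX^c * ((-1)^n * Odd n ^ 2)"
    unfolding c_def two_tri[symmetric] by (simp add: power_add power2_eq_square mult_ac)
  have nz: "XX^c \<noteq> 0" by simp
  have "XX^c * ((-1)^n * Odd n ^ 2) = XX^c * (\<Sum>k\<le>2*n. (-1)^k * qb (XX^2) (2*n) k * XX^((dd n k)^2))"
    using L R by (rule trans[OF sym])
  then have H: "(-1)^n * Odd n ^ 2 = (\<Sum>k\<le>2*n. (-1)^k * qb (XX^2) (2*n) k * XX^((dd n k)^2))"
    by (simp only: mult_left_cancel[OF nz])
  have s1: "(-1::rat fps)^n * (-1)^n = 1" by (simp flip: power_mult_distrib)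
  have "Odd n ^ 2 = (-1)^n * ((-1)^n * Odd n ^ 2)"
    by (simp only: mult.assoc[symmetric] s1 mult_1)
  then have "Odd n ^ 2 = (-1)^n * (\<Sum>k\<le>2*n. (-1)^k * qb (XX^2) (2*n) k * XX^((dd n k)^2))"
    by (simp only: H)
  also have "\<dots> = (\<Sum>k\<le>2*n. (-1)^(dd n k) * qb (XX^2) (2*n) k * XX^((dd n k)^2))"
    unfolding sum_distrib_left
  proof (intro sum.cong refl)
    fix k
    show "(-1)^n * ((-1)^k * qb (XX^2) (2*n) k * XX^((dd n k)^2)) = (-1)^(dd n k) * qb (XX^2) (2*n) k * XX^((dd n k)^2)"
      by (simp only: sign_dd[symmetric] power_add mult.assoc)
  qed
  finally show ?thesis .
qed



definition Th :: "nat \<Rightarrow> rat fps" where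
  "Th n = (\<Sum>k\<le>2*n. (-1)^(dd n k) * XX^((dd n k)^2))"

definition Dis :: "nat \<Rightarrow> rat fps" where "Dis m = (\<Prod>j<m. 1 + XX^(Suc j))"

lemma min_dd: "k \<le> 2*n \<Longrightarrow> min k (2*n-k) + dd n k = n"
  by (auto simp: dd_def min_def)

lemma sq_ge: "2*d \<le> (d::nat)^2 + 1"
  by (cases d) (auto simp: power2_eq_square)

lemma ring2: "((Oo::'a::comm_ring_1)*D - 1)*E = D*(Oo*E) - E"
  by (simp add: algebra_simps)

lemma ring3: "(T::'a::comm_ring_1)*D - Oo*E = -((Oo^2*E - T)*D) + (Oo*E)*(Oo*D - 1)"
  by (simp add: algebra_simps power2_eq_square)

lemma C1:
  assumes "1 \<le> n"
  shows "XX^(2*n+1) dvd Odd n ^ 2 * pch (XX^2) n - Th n"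
proof -
  have "Odd n ^ 2 * pch (XX^2) n - Th n
      = (\<Sum>k\<le>2*n. (-1)^(dd n k) * XX^((dd n k)^2) * (qb (XX^2) (2*n) k * pch (XX^2) n - 1))"
    unfolding G1[OF assms] Th_def sum_distrib_right sum_subtractf[symmetric]
    by (intro sum.cong refl) (simp add: algebra_simps)
  also have "XX^(2*n+1) dvd \<dots>"
  proof (rule dvd_sum)
    fix k assume "k \<in> {..2*n}"
    then have k: "k \<le> 2*n" by simp
    define d where "d = dd n k"
    define \<mu> where "\<mu> = min k (2*n-k)"
    have "\<mu> + d = n" unfolding \<mu>_def d_def using min_dd[OF k] .
    then have le: "2*n+1 \<le> d^2 + (2*\<mu>+2)" using sq_ge[of d] by linarith
    have "XX^(2*\<mu>+2) dvd qb (XX^2) (2*n) k * pch (XX^2) n - 1"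
      unfolding \<mu>_def using qb_E[OF k] .
    then have "XX^(d^2) * XX^(2*\<mu>+2) dvd XX^(d^2) * (qb (XX^2) (2*n) k * pch (XX^2) n - 1)"
      by (rule mult_dvd_mono[OF dvd_refl])
    then have "XX^(2*n+1) dvd XX^(d^2) * (qb (XX^2) (2*n) k * pch (XX^2) n - 1)"
      using le by (metis dvd_le power_add)
    then show "XX^(2*n+1) dvd (-1)^(dd n k) * XX^((dd n k)^2) * (qb (XX^2) (2*n) k * pch (XX^2) n - 1)"
      unfolding d_def by (simp add: mult.assoc)
  qed
  finally show ?thesis .
qed

lemma C2: "Odd n * pch (XX^2) n = pch XX (2*n)"
proof (induction n)
  case 0 then show ?case by (simp add: Odd_def pch_def)
next
  case (Suc n)
  have h0: "(XX^2)^Suc n = XX^(2*Suc n)" by (simp only: power_mult)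
  have h: "(XX^2)^Suc n = XX^(Suc (Suc (2*n)))" unfolding h0 by simp
  have o: "Odd (Suc n) = Odd n * (1 - XX^(Suc (2*n)))" by (simp add: Odd_def)
  have p: "pch XX (2 * Suc n) = pch XX (2*n) * ((1 - XX^(Suc (2*n))) * (1 - XX^(Suc (Suc (2*n)))))"
  proof -
    have "2 * Suc n = Suc (Suc (2*n))" by simp
    then show ?thesis by (simp only: pch_Suc mult.assoc)
  qed
  have "Odd (Suc n) * pch (XX^2) (Suc n) = (Odd n * pch (XX^2) n) * ((1 - XX^(Suc (2*n))) * (1 - XX^(Suc (Suc (2*n)))))"
    by (simp only: o pch_Suc h mult_ac)
  then show ?case unfolding p Suc.IH .
qed

lemma C3: "Dis m * pch XX m = pch (XX^2) m"
proof (induction m)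
  case 0 then show ?case by (simp add: Dis_def pch_def)
next
  case (Suc m)
  have h0: "(XX^2)^Suc m = XX^(2*Suc m)" by (simp only: power_mult)
  have h: "(XX^2)^Suc m = XX^(Suc m) * XX^(Suc m)" unfolding h0 mult_2 power_add ..
  have "Dis (Suc m) * pch XX (Suc m) = (Dis m * pch XX m) * ((1 + XX^(Suc m)) * (1 - XX^(Suc m)))"
    by (simp add: Dis_def pch_Suc mult_ac)
  also have "(1 + XX^(Suc m)) * (1 - XX^(Suc m)) = 1 - (XX^2)^Suc m"
    unfolding h by (simp add: algebra_simps)
  finally show ?case using Suc by (simp add: pch_Suc)
qed

lemma C4: "XX^(2*n+2) dvd Odd n * Dis (2*n) - 1"
proof -
  have "(Odd n * Dis (2*n) - 1) * pch (XX^2) n = Dis (2*n) * (Odd n * pch (XX^2) n) - pch (XX^2) n"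
    by (rule ring2)
  also have "\<dots> = pch (XX^2) (2*n) - pch (XX^2) n" unfolding C2 C3 ..
  finally have "XX^(2*n+2) dvd (Odd n * Dis (2*n) - 1) * pch (XX^2) n"
    using pch_mono[of n "2*n"] by simp
  then show ?thesis by (rule unit_cancel) (simp add: pch_nth0)
qed

lemma C5:
  assumes "1 \<le> n"
  shows "XX^(2*n+1) dvd Th n * Dis (2*n) - pch XX (2*n)"
proof -
  have "Th n * Dis (2*n) - pch XX (2*n)
      = - ((Odd n ^ 2 * pch (XX^2) n - Th n) * Dis (2*n)) + pch XX (2*n) * (Odd n * Dis (2*n) - 1)"
    unfolding C2[symmetric] by (rule ring3)
  also have "XX^(2*n+1) dvd \<dots>"
  proof -
    have a: "XX^(2*n+1) dvd Odd n ^ 2 * pch (XX^2) n - Th n" by (rule C1[OF assms])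
    have b: "XX^(2*n+1) dvd Odd n * Dis (2*n) - 1" using C4[of n] by (rule dvd_le[rotated]) simp
    show ?thesis using a b by (simp add: dvd_add dvd_mult dvd_mult2)
  qed
  finally show ?thesis .
qed

lemma sum_dd:
  fixes h :: "nat \<Rightarrow> 'a::comm_ring_1"
  shows "(\<Sum>k\<le>2*n. h (dd n k)) = h 0 + 2 * (\<Sum>m\<in>{1..n}. h m)"
proof -
  have U: "{..2*n} = {..<n} \<union> {n..2*n}" by auto
  have 1: "(\<Sum>k<n. h (dd n k)) = (\<Sum>m\<in>{1..n}. h m)"
    by (rule sum.reindex_bij_witness[where i="\<lambda>m. n - m" and j="\<lambda>k. n - k"]) (auto simp: dd_def)
  have 2: "(\<Sum>k\<in>{n..2*n}. h (dd n k)) = (\<Sum>m\<le>n. h m)"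
    by (rule sum.reindex_bij_witness[where i="\<lambda>m. m + n" and j="\<lambda>k. k - n"]) (auto simp: dd_def)
  have 3: "(\<Sum>m\<le>n. h m) = h 0 + (\<Sum>m\<in>{1..n}. h m)"
  proof -
    have "{..n} = insert 0 {1..n}" by auto
    then show ?thesis by simp
  qed
  have "(\<Sum>k\<le>2*n. h (dd n k)) = (\<Sum>k<n. h (dd n k)) + (\<Sum>k\<in>{n..2*n}. h (dd n k))"
    unfolding U by (rule sum.union_disjoint) auto
  also have "\<dots> = (\<Sum>m\<in>{1..n}. h m) + (h 0 + (\<Sum>m\<in>{1..n}. h m))" unfolding 1 2 3 ..
  also have "\<dots> = h 0 + 2 * (\<Sum>m\<in>{1..n}. h m)" by (simp only: mult_2 add_ac)
  finally show ?thesis .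
qed

lemma Th_expand: "Th n = 1 + (\<Sum>m\<in>{1..n}. fps_const (2 * (-1)^m) * XX^(m^2))"
proof -
  have "Th n = 1 + 2 * (\<Sum>m\<in>{1..n}. (-1)^m * XX^(m^2))"
  proof -
    have z: "(-1::rat fps)^0 * XX^(0^2) = 1" by simp
    show ?thesis unfolding Th_def using sum_dd[of "\<lambda>d. (-1)^d * XX^(d^2)" n] unfolding z .
  qed
  also have "2 * (\<Sum>m\<in>{1..n}. (-1)^m * XX^(m^2)) = (\<Sum>m\<in>{1..n}. fps_const (2 * (-1)^m) * XX^(m^2))"
    unfolding sum_distrib_left
  proof (intro sum.cong refl)
    fix m :: nat
    have "(2::rat fps) * (-1)^m = fps_const (2 * (-1)^m)"
      by (simp flip: fps_const_power fps_const_mult fps_const_neg add: numeral_fps_const)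
    then show "2 * ((-1)^m * XX^(m^2)) = fps_const (2 * (-1)^m) * XX^(m^2)"
      by (simp add: mult.assoc[symmetric])
  qed
  finally show ?thesis .
qed



definition Af :: "nat \<Rightarrow> rat fps" where
  "Af j = Abs_fps (\<lambda>i. if i = 0 then 1 else if j dvd i then 2 else 0)"

definition Pf :: "nat \<Rightarrow> rat fps" where "Pf m = (\<Prod>j<m. Af (Suc j))"

lemma A_mul:
  assumes "1 \<le> j"
  shows "Af j * (1 - XX^j) = 1 + XX^j"
proof -
  have "Af j * (1 - XX^j) = Af j - Af j * XX^j" by (simp add: right_diff_distrib)
  also have "\<dots> = 1 + XX^j"
  proof (rule fps_ext)
    fix i
    show "(Af j - Af j * XX^j) $ i = (1 + XX^j) $ i"
    proof (cases "i < j")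
      case True
      then show ?thesis using assms
        by (auto simp: Af_def fps_X_power_mult_right_nth dest: dvd_imp_le)
    next
      case False
      then have "j dvd i \<longleftrightarrow> j dvd (i - j)" by (simp add: dvd_minus_self)
      then show ?thesis using False assms
        by (auto simp: Af_def fps_X_power_mult_right_nth)
    qed
  qed
  finally show ?thesis .
qed

lemma P_mul: "Pf m * pch XX m = Dis m"
proof (induction m)
  case 0 then show ?case by (simp add: Pf_def pch_def Dis_def)
next
  case (Suc m)
  have "Pf (Suc m) * pch XX (Suc m) = (Pf m * pch XX m) * (Af (Suc m) * (1 - XX^Suc m))"
    by (simp add: Pf_def pch_Suc mult_ac)
  also have "\<dots> = Dis m * (1 + XX^Suc m)" using Suc A_mul[of "Suc m"] by simp
  also have "\<dots> = Dis (Suc m)" by (simp add: Dis_def)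
  finally show ?case .
qed

lemma C6:
  assumes "1 \<le> n"
  shows "XX^(2*n+1) dvd Th n * Pf (2*n) - 1"
proof -
  have "(Th n * Pf (2*n) - 1) * pch XX (2*n) = Th n * (Pf (2*n) * pch XX (2*n)) - pch XX (2*n)"
    by (simp add: algebra_simps)
  also have "\<dots> = Th n * Dis (2*n) - pch XX (2*n)" unfolding P_mul ..
  finally have "XX^(2*n+1) dvd (Th n * Pf (2*n) - 1) * pch XX (2*n)" using C5[OF assms] by simp
  then show ?thesis by (rule unit_cancel) (simp add: pch_nth0)
qed

lemma C7:
  assumes "1 \<le> n" "1 \<le> i" "i \<le> 2*n"
  shows "Pf (2*n) $ i + (\<Sum>m\<in>{1..n}. 2 * (-1)^m * (if i < m^2 then 0 else Pf (2*n) $ (i - m^2))) = 0"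
proof -
  have "(Th n * Pf (2*n) - 1) $ i = 0" using dvd_coeff[OF C6[OF assms(1)]] assms(3) by simp
  then have z: "(Th n * Pf (2*n)) $ i = 0" using assms(2) by simp
  have "Th n * Pf (2*n) = Pf (2*n) + (\<Sum>m\<in>{1..n}. fps_const (2 * (-1)^m) * (XX^(m^2) * Pf (2*n)))"
    unfolding Th_expand by (simp add: distrib_right sum_distrib_right mult.assoc)
  then have "(Th n * Pf (2*n)) $ i = Pf (2*n) $ i + (\<Sum>m\<in>{1..n}. 2 * (-1)^m * (if i < m^2 then 0 else Pf (2*n) $ (i - m^2)))"
    by (simp add: fps_sum_nth fps_X_power_mult_nth)
  then show ?thesis using z by simp
qed



definition OP :: "nat \<Rightarrow> nat \<Rightarrow> (nat multiset \<times> nat set) set" where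
  "OP k i = {(M,S). (\<forall>x\<in>#M. 0 < x \<and> x \<le> k) \<and> sum_mset M = i \<and> S \<subseteq> set_mset M}"

lemma sum_part: "sum_mset (M::nat multiset) = sum_mset (filter_mset P M) + sum_mset (filter_mset (\<lambda>x. \<not> P x) M)"
  using multiset_partition[of M P] by (metis sum_mset.union)

lemma cnt_le: "count M x * x \<le> sum_mset (M :: nat multiset)"
  using sum_part[of M "\<lambda>y. y = x"] by (simp add: filter_eq_replicate_mset)

lemma mem_le: "x \<in># M \<Longrightarrow> x \<le> sum_mset (M :: nat multiset)"
proof -
  assume "x \<in># M"
  then have "1 \<le> count M x" by (simp add: Suc_le_eq)
  then have "x \<le> count M x * x" by simp
  then show ?thesis using cnt_le[of M x] by linarith
qed

lemma OP_all: "i \<le> k \<Longrightarrow> OP k i = overpartitions i"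
  unfolding OP_def overpartitions_def using mem_le by fastforce

lemma empty_crit: "(\<forall>x\<in>#M. 0 < x \<and> x \<le> (0::nat)) \<longleftrightarrow> M = {#}"
  by (cases "M = {#}") (auto simp: multiset_nonemptyE)

lemma OP_0: "OP 0 i = (if i = 0 then {({#},{})} else {})"
  unfolding OP_def empty_crit by auto

lemma U0: "{(M,S)\<in>OP (Suc k) i. count M (Suc k) = 0} = OP k i"
proof -
  have "(\<forall>x\<in>#M. 0 < x \<and> x \<le> Suc k) \<and> count M (Suc k) = 0 \<longleftrightarrow> (\<forall>x\<in>#M. 0 < x \<and> x \<le> k)" for M
    by (metis count_eq_zero_iff le_Suc_eq Suc_n_not_le_n)
  then show ?thesis unfolding OP_def by auto
qed

lemma split_M:
  assumes "\<forall>x\<in>#M. x \<le> Suc k"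
  shows "filter_mset (\<lambda>x. \<not> x \<le> k) M = replicate_mset (count M (Suc k)) (Suc k)"
proof -
  have "filter_mset (\<lambda>x. \<not> x \<le> k) M = filter_mset (\<lambda>x. x = Suc k) M"
    by (rule filter_mset_cong0) (use assms le_Suc_eq in fastforce)
  then show ?thesis by (simp add: filter_eq_replicate_mset)
qed

lemma filter_add_rep:
  assumes "\<forall>x\<in>#M. x \<le> k"
  shows "filter_mset (\<lambda>x. x \<le> k) (M + replicate_mset t (Suc k)) = M"
proof -
  have "filter_mset (\<lambda>x. x \<le> k) M = filter_mset (\<lambda>x. True) M"
    by (rule filter_mset_cong0) (use assms in blast)
  moreover have "filter_mset (\<lambda>x. x \<le> k) (replicate_mset t (Suc k)) = {#}"
    by (cases t) auto
  ultimately show ?thesis by simp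
qed

definition ff :: "nat \<Rightarrow> nat \<Rightarrow> (nat multiset \<times> nat set) \<times> bool \<Rightarrow> nat multiset \<times> nat set" where
  "ff k t = (\<lambda>((M,S),b). (M + replicate_mset t (Suc k), if b then insert (Suc k) S else S))"

definition gg :: "nat \<Rightarrow> nat multiset \<times> nat set \<Rightarrow> (nat multiset \<times> nat set) \<times> bool" where
  "gg k = (\<lambda>(M,S). ((filter_mset (\<lambda>x. x \<le> k) M, S - {Suc k}), Suc k \<in> S))"

lemma Ut:
  assumes t: "1 \<le> t" and ti: "t * Suc k \<le> i"
  shows "bij_betw (ff k t) (OP k (i - t * Suc k) \<times> UNIV) {(M,S)\<in>OP (Suc k) i. count M (Suc k) = t}"
proof (rule bij_betw_byWitness[where f'="gg k"])
  show "\<forall>a\<in>OP k (i - t * Suc k) \<times> UNIV. gg k (ff k t a) = a"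
  proof
    fix a assume "a \<in> OP k (i - t * Suc k) \<times> (UNIV :: bool set)"
    then obtain M S b where a: "a = ((M,S),b)" and M: "\<forall>x\<in>#M. 0 < x \<and> x \<le> k" and S: "S \<subseteq> set_mset M"
      unfolding OP_def by auto
    have f: "filter_mset (\<lambda>x. x \<le> k) (M + replicate_mset t (Suc k)) = M"
      using M by (intro filter_add_rep) blast
    have "Suc k \<notin> S" using S M by fastforce
    then have "(if b then insert (Suc k) S else S) - {Suc k} = S" "Suc k \<in> (if b then insert (Suc k) S else S) \<longleftrightarrow> b"
      by auto
    then show "gg k (ff k t a) = a" unfolding a ff_def gg_def using f by simp
  qed
  show "\<forall>a\<in>{(M,S)\<in>OP (Suc k) i. count M (Suc k) = t}. ff k t (gg k a) = a"
  proof
    fix a assume "a \<in> {(M,S)\<in>OP (Suc k) i. count M (Suc k) = t}"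
    then obtain M S where a: "a = (M,S)" and M: "\<forall>x\<in>#M. 0 < x \<and> x \<le> Suc k" and c: "count M (Suc k) = t"
      and S: "S \<subseteq> set_mset M"
      unfolding OP_def by auto
    have "filter_mset (\<lambda>x. x \<le> k) M + replicate_mset t (Suc k) = M"
      using multiset_partition[of M "\<lambda>x. x \<le> k"] split_M[of M k] M c by auto
    moreover have "(if Suc k \<in> S then insert (Suc k) (S - {Suc k}) else S - {Suc k}) = S" by auto
    ultimately show "ff k t (gg k a) = a" unfolding a ff_def gg_def by simp
  qed
  show "ff k t ` (OP k (i - t * Suc k) \<times> UNIV) \<subseteq> {(M,S)\<in>OP (Suc k) i. count M (Suc k) = t}"
  proof
    fix y assume "y \<in> ff k t ` (OP k (i - t * Suc k) \<times> (UNIV :: bool set))"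
    then obtain M S b where y: "y = ff k t ((M,S),b)" and M: "\<forall>x\<in>#M. 0 < x \<and> x \<le> k"
       and s: "sum_mset M = i - t * Suc k" and S: "S \<subseteq> set_mset M"
      unfolding OP_def by auto
    have c0: "count M (Suc k) = 0" using M by (metis count_eq_zero_iff Suc_n_not_le_n)
    have p: "\<forall>x\<in>#M + replicate_mset t (Suc k). 0 < x \<and> x \<le> Suc k" using M t by auto
    have sm: "sum_mset (M + replicate_mset t (Suc k)) = i" using s ti by simp
    have ss: "(if b then insert (Suc k) S else S) \<subseteq> set_mset (M + replicate_mset t (Suc k))" using S t by auto
    show "y \<in> {(M,S)\<in>OP (Suc k) i. count M (Suc k) = t}"
      unfolding y ff_def OP_def using p sm ss c0 by simp
  qed
  show "gg k ` {(M,S)\<in>OP (Suc k) i. count M (Suc k) = t} \<subseteq> OP k (i - t * Suc k) \<times> UNIV"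
  proof
    fix y assume "y \<in> gg k ` {(M,S)\<in>OP (Suc k) i. count M (Suc k) = t}"
    then obtain M S where y: "y = gg k (M,S)" and M: "\<forall>x\<in>#M. 0 < x \<and> x \<le> Suc k"
       and s: "sum_mset M = i" and S: "S \<subseteq> set_mset M" and c: "count M (Suc k) = t"
      unfolding OP_def by auto
    have "sum_mset M = sum_mset (filter_mset (\<lambda>x. x \<le> k) M) + sum_mset (filter_mset (\<lambda>x. \<not> x \<le> k) M)"
      by (rule sum_part)
    moreover have "filter_mset (\<lambda>x. \<not> x \<le> k) M = replicate_mset t (Suc k)"
      using split_M[of M k] M c by auto
    ultimately have s': "sum_mset (filter_mset (\<lambda>x. x \<le> k) M) = i - t * Suc k" using s by simp
    have S': "S - {Suc k} \<subseteq> set_mset (filter_mset (\<lambda>x. x \<le> k) M)"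
      using S M by (auto simp: le_Suc_eq)
    have M': "\<forall>x\<in>#filter_mset (\<lambda>x. x \<le> k) M. 0 < x \<and> x \<le> k" using M by auto
    show "y \<in> OP k (i - t * Suc k) \<times> UNIV" unfolding y gg_def OP_def using M' s' S' by simp
  qed
qed

lemma le_div_mult: "t \<le> i div Suc k \<Longrightarrow> t * Suc k \<le> i"
  by (metis zero_less_Suc less_eq_div_iff_mult_less_eq)

lemma Ucard:
  assumes "1 \<le> t" "t * Suc k \<le> i" "finite (OP k (i - t * Suc k))"
  shows "finite {(M,S)\<in>OP (Suc k) i. count M (Suc k) = t}"
    "card {(M,S)\<in>OP (Suc k) i. count M (Suc k) = t} = 2 * card (OP k (i - t * Suc k))"
proof -
  have b: "bij_betw (ff k t) (OP k (i - t * Suc k) \<times> UNIV) {(M,S)\<in>OP (Suc k) i. count M (Suc k) = t}"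
    using Ut assms(1,2) by blast
  have f: "finite (OP k (i - t * Suc k) \<times> (UNIV :: bool set))" using assms(3) by simp
  show "finite {(M,S)\<in>OP (Suc k) i. count M (Suc k) = t}" using bij_betw_finite b f by blast
  have "card {(M,S)\<in>OP (Suc k) i. count M (Suc k) = t} = card (OP k (i - t * Suc k) \<times> (UNIV :: bool set))"
    using bij_betw_same_card[OF b] by simp
  also have "\<dots> = 2 * card (OP k (i - t * Suc k))" by (simp add: card_cartesian_product mult.commute)
  finally show "card {(M,S)\<in>OP (Suc k) i. count M (Suc k) = t} = 2 * card (OP k (i - t * Suc k))" .
qed

lemma OP_decomp: "OP (Suc k) i = (\<Union>t\<in>{0..i div Suc k}. {(M,S)\<in>OP (Suc k) i. count M (Suc k) = t})"
proof -
  have "count M (Suc k) \<le> i div Suc k" if "(M,S) \<in> OP (Suc k) i" for M S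
  proof -
    have "count M (Suc k) * Suc k \<le> i" using that cnt_le[of M "Suc k"] unfolding OP_def by auto
    then show ?thesis by (simp add: less_eq_div_iff_mult_less_eq)
  qed
  then show ?thesis by auto
qed

lemma Pf_Suc: "Pf (Suc k) = Af (Suc k) * Pf k"
  by (simp add: Pf_def mult.commute)

lemma fps_side:
  "(Af (Suc k) * F) $ i = F $ i + (\<Sum>t\<in>{1..i div Suc k}. 2 * F $ (i - t * Suc k))"
proof -
  define g where "g j = Af (Suc k) $ j * F $ (i - j)" for j
  have "(Af (Suc k) * F) $ i = (\<Sum>j\<in>{0..i}. g j)" unfolding g_def fps_mult_nth ..
  also have "{0..i} = insert 0 {1..i}" by auto
  also have "(\<Sum>j\<in>insert 0 {1..i}. g j) = g 0 + (\<Sum>j\<in>{1..i}. g j)" by simp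
  also have "g 0 = F $ i" by (simp add: g_def Af_def)
  also have "(\<Sum>j\<in>{1..i}. g j) = (\<Sum>j\<in>(\<lambda>t. t * Suc k) ` {1..i div Suc k}. g j)"
  proof (rule sum.mono_neutral_cong_right)
    show "(\<lambda>t. t * Suc k) ` {1..i div Suc k} \<subseteq> {1..i}"
    proof
      fix j assume "j \<in> (\<lambda>t. t * Suc k) ` {1..i div Suc k}"
      then obtain t where "j = t * Suc k" "1 \<le> t" "t \<le> i div Suc k" by auto
      then show "j \<in> {1..i}" using le_div_mult[of t i k] by (simp add: Suc_le_eq)
    qed
    show "\<forall>j\<in>{1..i} - (\<lambda>t. t * Suc k) ` {1..i div Suc k}. g j = 0"
    proof
      fix j assume j: "j \<in> {1..i} - (\<lambda>t. t * Suc k) ` {1..i div Suc k}"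
      have "\<not> Suc k dvd j"
      proof
        assume "Suc k dvd j"
        then obtain t where jt: "j = t * Suc k" by (metis dvdE mult.commute)
        with j have "1 \<le> t" by (cases t) auto
        moreover have "t \<le> i div Suc k" using j jt by (metis DiffD1 atLeastAtMost_iff zero_less_Suc less_eq_div_iff_mult_less_eq)
        ultimately have "t \<in> {1..i div Suc k}" by simp
        then have "j \<in> (\<lambda>t. t * Suc k) ` {1..i div Suc k}" using jt by blast
        with j show False by blast
      qed
      then show "g j = 0" using j by (simp add: g_def Af_def)
    qed
  qed auto
  also have "\<dots> = (\<Sum>t\<in>{1..i div Suc k}. g (t * Suc k))"
  proof (subst sum.reindex)
    show "inj_on (\<lambda>t. t * Suc k) {1..i div Suc k}" by (rule inj_onI) (simp del: mult_Suc_right)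
  qed simp
  also have "\<dots> = (\<Sum>t\<in>{1..i div Suc k}. 2 * F $ (i - t * Suc k))"
  proof (intro sum.cong refl)
    fix t assume "t \<in> {1..i div Suc k}"
    then have "t * Suc k \<noteq> 0" "t \<noteq> 0" by auto
    moreover have "Suc k dvd t * Suc k" by (rule dvd_triv_right)
    ultimately show "g (t * Suc k) = 2 * F $ (i - t * Suc k)" unfolding g_def Af_def
      by (simp del: mult_Suc_right)
  qed
  finally show ?thesis .
qed

lemma Pf_card: "finite (OP k i) \<and> Pf k $ i = of_nat (card (OP k i))"
proof (induction k arbitrary: i)
  case 0 then show ?case by (simp add: OP_0 Pf_def)
next
  case (Suc k)
  define U where "U t = {(M,S)\<in>OP (Suc k) i. count M (Suc k) = t}" for t
  define d where "d = i div Suc k"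
  have U0': "U 0 = OP k i" unfolding U_def by (rule U0)
  have td: "t * Suc k \<le> i" if "t \<in> {1..d}" for t
    using that unfolding d_def by (intro le_div_mult) simp
  have fU: "finite (U t)" and cU: "card (U t) = 2 * card (OP k (i - t * Suc k))" if "t \<in> {1..d}" for t
    using Ucard[of t k i] td[OF that] that Suc.IH unfolding U_def by auto
  have fin: "\<forall>t\<in>{0..d}. finite (U t)" using fU U0' Suc.IH by (metis atLeastAtMost_iff le_0_eq not_less_eq_eq One_nat_def Suc_leI neq0_conv)
  have dec: "OP (Suc k) i = (\<Union>t\<in>{0..d}. U t)" unfolding U_def d_def by (rule OP_decomp)
  have disj: "\<forall>t\<in>{0..d}. \<forall>s\<in>{0..d}. t \<noteq> s \<longrightarrow> U t \<inter> U s = {}" unfolding U_def by auto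
  have finOP: "finite (OP (Suc k) i)" unfolding dec using fin by blast
  have "card (OP (Suc k) i) = (\<Sum>t\<in>{0..d}. card (U t))"
    unfolding dec by (rule card_UN_disjoint) (use fin disj in auto)
  also have "{0..d} = insert 0 {1..d}" by auto
  also have "(\<Sum>t\<in>insert 0 {1..d}. card (U t)) = card (OP k i) + (\<Sum>t\<in>{1..d}. 2 * card (OP k (i - t * Suc k)))"
    using U0' cU by simp
  finally have cardeq: "card (OP (Suc k) i) = card (OP k i) + (\<Sum>t\<in>{1..d}. 2 * card (OP k (i - t * Suc k)))" .
  have "Pf (Suc k) $ i = Pf k $ i + (\<Sum>t\<in>{1..d}. 2 * Pf k $ (i - t * Suc k))"
    unfolding Pf_Suc d_def by (rule fps_side)
  also have "\<dots> = of_nat (card (OP (Suc k) i))"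
    unfolding cardeq using Suc.IH by simp
  finally show ?case using finOP by simp
qed



lemma len_le_sum: "\<forall>x\<in>set c. 0 < x \<Longrightarrow> length c \<le> sum_list (c :: nat list)"
  by (induction c) auto

lemma mem_le_sum: "x \<in> set c \<Longrightarrow> x \<le> sum_list (c :: nat list)"
  by (induction c) auto

lemma comp_finite: "finite (compositions_in T n)"
proof (rule finite_subset)
  show "compositions_in T n \<subseteq> {xs. set xs \<subseteq> {0..n} \<and> length xs \<le> n}"
    unfolding compositions_in_def using len_le_sum mem_le_sum by fastforce
  show "finite {xs. set xs \<subseteq> {0..n} \<and> length xs \<le> n}" by (rule finite_lists_length_le) simp
qed

lemma pos_sum0: "\<forall>x\<in>set c. 0 < x \<Longrightarrow> sum_list c = (0::nat) \<Longrightarrow> c = []"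
  by (cases c) auto

lemma comp_0: "compositions_in T 0 = {[]}"
  unfolding compositions_in_def using pos_sum0 by auto

lemma sq_inj: "(m::nat)^2 = m'^2 \<Longrightarrow> m = m'"
  using power_eq_imp_eq_base[of m 2 m'] by simp

lemma P4_iff: "x \<in> P4 \<longleftrightarrow> (\<exists>m. 1 \<le> m \<and> x = m^2)"
  unfolding P4_def by auto

lemma comp_decomp:
  assumes "1 \<le> n"
  shows "compositions_in P4 n = (\<Union>m\<in>{m\<in>{1..n}. m^2 \<le> n}. (\<lambda>c. m^2 # c) ` compositions_in P4 (n - m^2))"
proof
  show "compositions_in P4 n \<subseteq> (\<Union>m\<in>{m\<in>{1..n}. m^2 \<le> n}. (\<lambda>c. m^2 # c) ` compositions_in P4 (n - m^2))"
  proof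
    fix c assume c: "c \<in> compositions_in P4 n"
    then obtain s c' where cs: "c = s # c'" using assms unfolding compositions_in_def
      by (cases c) auto
    with c have s: "s \<in> P4" and c': "\<forall>x\<in>set c'. 0 < x \<and> x \<in> P4" and sm: "s + sum_list c' = n"
      unfolding compositions_in_def by auto
    then obtain m where m: "1 \<le> m" "s = m^2" using P4_iff by blast
    have "m \<le> m^2" using m(1) by (simp add: power2_eq_square)
    then have mJ: "m \<in> {m\<in>{1..n}. m^2 \<le> n}" using m sm by auto
    have "c' \<in> compositions_in P4 (n - m^2)" using c' sm m unfolding compositions_in_def by auto
    then show "c \<in> (\<Union>m\<in>{m\<in>{1..n}. m^2 \<le> n}. (\<lambda>c. m^2 # c) ` compositions_in P4 (n - m^2))"
      using mJ cs m by blast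
  qed
  show "(\<Union>m\<in>{m\<in>{1..n}. m^2 \<le> n}. (\<lambda>c. m^2 # c) ` compositions_in P4 (n - m^2)) \<subseteq> compositions_in P4 n"
  proof clarify
    fix m c assume m: "m \<in> {1..n}" "m^2 \<le> n" and c: "c \<in> compositions_in P4 (n - m^2)"
    have "m^2 \<in> P4" using m P4_iff by auto
    moreover have "0 < m^2" using m by simp
    ultimately show "m^2 # c \<in> compositions_in P4 n" using c m unfolding compositions_in_def by auto
  qed
qed

definition aa :: "nat \<Rightarrow> int" where "aa n = (\<Sum>c\<in>compositions_in P4 n. (-2) ^ length c)"

lemma aa_rec:
  assumes "1 \<le> n"
  shows "aa n = (\<Sum>m\<in>{m\<in>{1..n}. m^2 \<le> n}. -2 * aa (n - m^2))"
proof -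
  let ?J = "{m\<in>{1..n}. m^2 \<le> n}"
  have "aa n = (\<Sum>m\<in>?J. \<Sum>c\<in>(\<lambda>c. m^2 # c) ` compositions_in P4 (n - m^2). (-2::int) ^ length c)"
    unfolding aa_def comp_decomp[OF assms]
  proof (rule sum.UNION_disjoint)
    show "finite ?J" by simp
    show "\<forall>m\<in>?J. finite ((\<lambda>c. m^2 # c) ` compositions_in P4 (n - m^2))" using comp_finite by blast
    show "\<forall>m\<in>?J. \<forall>m'\<in>?J. m \<noteq> m' \<longrightarrow>
      (\<lambda>c. m^2 # c) ` compositions_in P4 (n - m^2) \<inter> (\<lambda>c. m'^2 # c) ` compositions_in P4 (n - m'^2) = {}"
      using sq_inj by blast
  qed
  also have "\<dots> = (\<Sum>m\<in>?J. -2 * aa (n - m^2))"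
  proof (intro sum.cong refl)
    fix m
    have "(\<Sum>c\<in>(\<lambda>c. m^2 # c) ` compositions_in P4 (n - m^2). (-2::int) ^ length c)
        = (\<Sum>c\<in>compositions_in P4 (n - m^2). (-2) ^ length (m^2 # c))"
      by (subst sum.reindex) (auto simp: inj_on_def)
    also have "\<dots> = -2 * aa (n - m^2)" unfolding aa_def sum_distrib_left by simp
    finally show "(\<Sum>c\<in>(\<lambda>c. m^2 # c) ` compositions_in P4 (n - m^2). (-2::int) ^ length c) = -2 * aa (n - m^2)" .
  qed
  finally show ?thesis .
qed

lemma pbar_Pf: "x \<le> k \<Longrightarrow> Pf k $ x = of_nat (overpartition_count x)"
  using Pf_card[of k x] OP_all[of x k] unfolding overpartition_count_def by simp

lemma pbar_rec:
  assumes "1 \<le> n"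
  shows "int (overpartition_count n) = (\<Sum>m\<in>{m\<in>{1..n}. m^2 \<le> n}. -2 * (-1)^m * int (overpartition_count (n - m^2)))"
proof -
  have C: "Pf (2*n) $ n + (\<Sum>m\<in>{1..n}. 2 * (-1)^m * (if n < m^2 then 0 else Pf (2*n) $ (n - m^2))) = 0"
    using C7[OF assms assms] by simp
  have "(\<Sum>m\<in>{1..n}. 2 * (-1)^m * (if n < m^2 then 0 else Pf (2*n) $ (n - m^2)))
      = (\<Sum>m\<in>{1..n}. if m^2 \<le> n then 2 * (-1)^m * of_nat (overpartition_count (n - m^2)) else 0)"
    by (intro sum.cong refl) (auto simp: pbar_Pf not_less)
  also have "\<dots> = (\<Sum>m\<in>{m\<in>{1..n}. m^2 \<le> n}. 2 * (-1)^m * of_nat (overpartition_count (n - m^2)))"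
    by (rule sum.inter_filter[symmetric]) simp
  finally have "(of_nat (overpartition_count n) :: rat) = - (\<Sum>m\<in>{m\<in>{1..n}. m^2 \<le> n}. 2 * (-1)^m * of_nat (overpartition_count (n - m^2)))"
    using C pbar_Pf[of n "2*n"] by (simp add: eq_neg_iff_add_eq_0)
  also have "\<dots> = of_int (\<Sum>m\<in>{m\<in>{1..n}. m^2 \<le> n}. -2 * (-1)^m * int (overpartition_count (n - m^2)))"
    by (simp add: sum_negf[symmetric])
  finally have "(of_int (int (overpartition_count n)) :: rat) = of_int (\<Sum>m\<in>{m\<in>{1..n}. m^2 \<le> n}. -2 * (-1)^m * int (overpartition_count (n - m^2)))"
    by simp
  then show ?thesis by (simp only: of_int_eq_iff)
qed

lemma sign_sq: "(-1::int)^(m^2) = (-1)^m"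
  by (cases "even m") (auto simp: power2_eq_square)

theorem theorem3:
  fixes n :: nat
  shows "int (overpartition_count n)
           = (-1) ^ n * (\<Sum>c\<in>compositions_in P4 n. (-2) ^ length c)"
proof -
  have "int (overpartition_count n) = (-1)^n * aa n"
  proof (induction n rule: less_induct)
    case (less n)
    show ?case
    proof (cases "n = 0")
      case True
      have "overpartitions 0 = {({#},{})}" using OP_all[of 0 0] OP_0[of 0] by simp
      then have "overpartition_count 0 = 1" unfolding overpartition_count_def by simp
      then show ?thesis using True by (simp add: aa_def comp_0)
    next
      case False
      then have n1: "1 \<le> n" by simp
      have "(-1)^n * aa n = (\<Sum>m\<in>{m\<in>{1..n}. m^2 \<le> n}. -2 * ((-1)^n * aa (n - m^2)))"
        unfolding aa_rec[OF n1] sum_distrib_left by (simp add: mult_ac)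
      also have "\<dots> = (\<Sum>m\<in>{m\<in>{1..n}. m^2 \<le> n}. -2 * (-1)^m * ((-1)^(n - m^2) * aa (n - m^2)))"
      proof (intro sum.cong refl)
        fix m assume "m \<in> {m\<in>{1..n}. m^2 \<le> n}"
        then have "n = m^2 + (n - m^2)" by simp
        then have "(-1::int)^n = (-1)^(m^2) * (-1)^(n - m^2)" by (metis power_add)
        then show "-2 * ((-1)^n * aa (n - m^2)) = -2 * (-1)^m * ((-1)^(n - m^2) * aa (n - m^2))"
          by (simp add: sign_sq mult_ac)
      qed
      also have "\<dots> = (\<Sum>m\<in>{m\<in>{1..n}. m^2 \<le> n}. -2 * (-1)^m * int (overpartition_count (n - m^2)))"
      proof (intro sum.cong refl)
        fix m assume "m \<in> {m\<in>{1..n}. m^2 \<le> n}"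
        then have "n - m^2 < n" by simp
        then show "-2 * (-1)^m * ((-1)^(n - m^2) * aa (n - m^2)) = -2 * (-1)^m * int (overpartition_count (n - m^2))"
          using less.IH by simp
      qed
      also have "\<dots> = int (overpartition_count n)" using pbar_rec[OF n1] by simp
      finally show ?thesis by simp
    qed
  qed
  then show ?thesis unfolding aa_def .
qed


end
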